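(* Let $\Omega$ be a compact Hausdorff space such that $C(\Omega)$ admits an equivalent URED norm. Let $E\subset\Omega$ be closed and $J=\{f\in C(\Omega): f|_E=0\}$, with quotient map $\pi:C(\Omega)\to C(\Omega)/J$. Suppose that for every Banach lattice $X$ and every bounded linear lattice homomorphism $T:X\to C(\Omega)/J$ there is a linear lattice homomorphism $T':X\to C(\Omega)$ with $\pi\circ T'=T$ and $\|T'\|=\|T\|$. Then $C(\Omega)/J$ admits an equivalent URED norm.
   Context: $C(\Omega)$ is the Banach lattice of real-valued continuous functions on $\Omega$ with the supremum norm and pointwise order; $C(\Omega)/J$ is identified (isometrically and as a Banach lattice) with $C(E)$ via $\pi(f)\mapsto f|_E$. A norm on a Banach space $Y$ is uniformly rotund in every direction (URED) if whenever $(x_n),(y_n)$ are sequences of unit vectors with $\lim_n\|\tfrac{x_n+y_n}{2}\|=1$ and there exist $z\in Y$ and scalars $r_n$ with $x_n-y_n=r_nz$ for all $n$, then $\lim_n\|x_n-y_n\|=0$. *)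

theory Defs
  imports "HOL-Analysis.Analysis"
begin

text \<open>C(Omega) for Omega the whole (compact Hausdorff) type 'a.\<close>
definition Cfun :: "('a::topological_space \<Rightarrow> real) set" where
  "Cfun = {f. continuous_on UNIV f}"

text \<open>C(E), realised as continuous functions on E extended by 0 outside E.
  This is C(Omega)/J via pi(f) = f restricted to E.\<close>
definition CfunOn :: "'a::topological_space set \<Rightarrow> ('a \<Rightarrow> real) set" where
  "CfunOn E = {g. continuous_on E g \<and> (\<forall>t. t \<notin> E \<longrightarrow> g t = 0)}"

definition supn :: "'a set \<Rightarrow> ('a \<Rightarrow> real) \<Rightarrow> real" where
  "supn S f = (if S = {} then 0 else (SUP t\<in>S. \<bar>f t\<bar>))"

definition is_norm_on :: "('a \<Rightarrow> real) set \<Rightarrow> (('a \<Rightarrow> real) \<Rightarrow> real) \<Rightarrow> bool" where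
  "is_norm_on V N \<longleftrightarrow>
     (\<forall>x\<in>V. N x \<ge> 0 \<and> (N x = 0 \<longleftrightarrow> x = (\<lambda>t. 0))) \<and>
     (\<forall>x\<in>V. \<forall>a. N (\<lambda>t. a * x t) = \<bar>a\<bar> * N x) \<and>
     (\<forall>x\<in>V. \<forall>y\<in>V. N (\<lambda>t. x t + y t) \<le> N x + N y)"

definition equiv_norms_on :: "('a \<Rightarrow> real) set \<Rightarrow> (('a \<Rightarrow> real) \<Rightarrow> real) \<Rightarrow> (('a \<Rightarrow> real) \<Rightarrow> real) \<Rightarrow> bool" where
  "equiv_norms_on V N M \<longleftrightarrow> (\<exists>c C. 0 < c \<and> 0 < C \<and> (\<forall>x\<in>V. c * M x \<le> N x \<and> N x \<le> C * M x))"

definition URED_on :: "('a \<Rightarrow> real) set \<Rightarrow> (('a \<Rightarrow> real) \<Rightarrow> real) \<Rightarrow> bool" where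
  "URED_on V N \<longleftrightarrow>
     (\<forall>(xs :: nat \<Rightarrow> 'a \<Rightarrow> real) ys z (r :: nat \<Rightarrow> real).
        (\<forall>n. xs n \<in> V \<and> ys n \<in> V \<and> N (xs n) = 1 \<and> N (ys n) = 1) \<and>
        z \<in> V \<and> (\<forall>n. (\<lambda>t. xs n t - ys n t) = (\<lambda>t. r n * z t)) \<and>
        ((\<lambda>n. N (\<lambda>t. (xs n t + ys n t) / 2)) \<longlonglongrightarrow> 1)
        \<longrightarrow> ((\<lambda>n. N (\<lambda>t. xs n t - ys n t)) \<longlonglongrightarrow> 0))"

definition admits_equiv_URED :: "('a \<Rightarrow> real) set \<Rightarrow> (('a \<Rightarrow> real) \<Rightarrow> real) \<Rightarrow> bool" where
  "admits_equiv_URED V M \<longleftrightarrow> (\<exists>N. is_norm_on V N \<and> equiv_norms_on V N M \<and> URED_on V N)"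

record 'v blat =
  carr :: "'v set"
  add  :: "'v \<Rightarrow> 'v \<Rightarrow> 'v"
  scal :: "real \<Rightarrow> 'v \<Rightarrow> 'v"
  zer  :: "'v"
  nrm  :: "'v \<Rightarrow> real"
  leq  :: "'v \<Rightarrow> 'v \<Rightarrow> bool"
  join :: "'v \<Rightarrow> 'v \<Rightarrow> 'v"

definition babs :: "'v blat \<Rightarrow> 'v \<Rightarrow> 'v" where
  "babs L x = join L x (scal L (-1) x)"

definition banach_lattice :: "'v blat \<Rightarrow> bool" where
  "banach_lattice L \<longleftrightarrow>
   \<comment> \<open>real vector space\<close>
   zer L \<in> carr L \<and>
   (\<forall>x\<in>carr L. \<forall>y\<in>carr L. add L x y \<in> carr L \<and> join L x y \<in> carr L) \<and>
   (\<forall>a. \<forall>x\<in>carr L. scal L a x \<in> carr L) \<and>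
   (\<forall>x\<in>carr L. \<forall>y\<in>carr L. \<forall>z\<in>carr L. add L (add L x y) z = add L x (add L y z)) \<and>
   (\<forall>x\<in>carr L. \<forall>y\<in>carr L. add L x y = add L y x) \<and>
   (\<forall>x\<in>carr L. add L x (zer L) = x) \<and>
   (\<forall>x\<in>carr L. add L x (scal L (-1) x) = zer L) \<and>
   (\<forall>a. \<forall>x\<in>carr L. \<forall>y\<in>carr L. scal L a (add L x y) = add L (scal L a x) (scal L a y)) \<and>
   (\<forall>a b. \<forall>x\<in>carr L. scal L (a + b) x = add L (scal L a x) (scal L b x)) \<and>
   (\<forall>a b. \<forall>x\<in>carr L. scal L a (scal L b x) = scal L (a * b) x) \<and>
   (\<forall>x\<in>carr L. scal L 1 x = x) \<and>
   \<comment> \<open>norm\<close>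
   (\<forall>x\<in>carr L. nrm L x \<ge> 0 \<and> (nrm L x = 0 \<longleftrightarrow> x = zer L)) \<and>
   (\<forall>a. \<forall>x\<in>carr L. nrm L (scal L a x) = \<bar>a\<bar> * nrm L x) \<and>
   (\<forall>x\<in>carr L. \<forall>y\<in>carr L. nrm L (add L x y) \<le> nrm L x + nrm L y) \<and>
   \<comment> \<open>completeness\<close>
   (\<forall>s. (\<forall>n. s n \<in> carr L) \<and>
        (\<forall>e>0. \<exists>K. \<forall>m\<ge>K. \<forall>n\<ge>K. nrm L (add L (s m) (scal L (-1) (s n))) < e)
        \<longrightarrow> (\<exists>l\<in>carr L. (\<lambda>n. nrm L (add L (s n) (scal L (-1) l))) \<longlonglongrightarrow> 0)) \<and>
   \<comment> \<open>partial order compatible with the linear structure\<close>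
   (\<forall>x\<in>carr L. leq L x x) \<and>
   (\<forall>x\<in>carr L. \<forall>y\<in>carr L. leq L x y \<and> leq L y x \<longrightarrow> x = y) \<and>
   (\<forall>x\<in>carr L. \<forall>y\<in>carr L. \<forall>z\<in>carr L. leq L x y \<and> leq L y z \<longrightarrow> leq L x z) \<and>
   (\<forall>x\<in>carr L. \<forall>y\<in>carr L. \<forall>z\<in>carr L. leq L x y \<longrightarrow> leq L (add L x z) (add L y z)) \<and>
   (\<forall>a. \<forall>x\<in>carr L. \<forall>y\<in>carr L. 0 \<le> a \<and> leq L x y \<longrightarrow> leq L (scal L a x) (scal L a y)) \<and>
   \<comment> \<open>lattice: join is the least upper bound\<close>
   (\<forall>x\<in>carr L. \<forall>y\<in>carr L. leq L x (join L x y) \<and> leq L y (join L x y)) \<and>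
   (\<forall>x\<in>carr L. \<forall>y\<in>carr L. \<forall>z\<in>carr L. leq L x z \<and> leq L y z \<longrightarrow> leq L (join L x y) z) \<and>
   \<comment> \<open>lattice norm\<close>
   (\<forall>x\<in>carr L. \<forall>y\<in>carr L. leq L (babs L x) (babs L y) \<longrightarrow> nrm L x \<le> nrm L y)"

definition lin_lattice_hom :: "'v blat \<Rightarrow> ('a \<Rightarrow> real) set \<Rightarrow> ('v \<Rightarrow> 'a \<Rightarrow> real) \<Rightarrow> bool" where
  "lin_lattice_hom L V T \<longleftrightarrow>
     (\<forall>x\<in>carr L. T x \<in> V) \<and>
     (\<forall>x\<in>carr L. \<forall>y\<in>carr L. T (add L x y) = (\<lambda>t. T x t + T y t)) \<and>
     (\<forall>a. \<forall>x\<in>carr L. T (scal L a x) = (\<lambda>t. a * T x t)) \<and>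
     (\<forall>x\<in>carr L. \<forall>y\<in>carr L. T (join L x y) = (\<lambda>t. max (T x t) (T y t)))"

definition bounded_op :: "'v blat \<Rightarrow> 'a set \<Rightarrow> ('v \<Rightarrow> 'a \<Rightarrow> real) \<Rightarrow> bool" where
  "bounded_op L S T \<longleftrightarrow> (\<exists>K. \<forall>x\<in>carr L. supn S (T x) \<le> K * nrm L x)"

definition opnorm :: "'v blat \<Rightarrow> 'a set \<Rightarrow> ('v \<Rightarrow> 'a \<Rightarrow> real) \<Rightarrow> real" where
  "opnorm L S T = Sup {supn S (T x) | x. x \<in> carr L \<and> nrm L x \<le> 1}"

end

theory Submission
  imports Defs
begin

lemma supn_bdd:
  fixes g :: "'a::topological_space \<Rightarrow> real"
  assumes "compact S" "continuous_on S g"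
  shows "bdd_above ((\<lambda>t. \<bar>g t\<bar>) ` S)"
proof -
  have "compact ((\<lambda>t. \<bar>g t\<bar>) ` S)"
    using assms by (auto intro!: compact_continuous_image continuous_intros)
  then show ?thesis by (intro bounded_imp_bdd_above compact_imp_bounded)
qed


lemma supn_upper:
  assumes "compact S" "continuous_on S g" "t \<in> S"
  shows "\<bar>g t\<bar> \<le> supn S g"
  using assms supn_bdd[OF assms(1,2)] unfolding supn_def
  by (auto intro: cSUP_upper)

lemma supn_least:
  assumes "0 \<le> B" "\<And>t. t \<in> S \<Longrightarrow> \<bar>g t\<bar> \<le> B"
  shows "supn S g \<le> B"
  using assms unfolding supn_def by (auto intro: cSUP_least)

lemma supn_nonneg:
  assumes "compact S" "continuous_on S g"
  shows "supn S g \<ge> 0"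
proof (cases "S = {}")
  case False
  then obtain t where "t \<in> S" by blast
  then show ?thesis using supn_upper[OF assms \<open>t \<in> S\<close>] by linarith
qed (simp add: supn_def)

lemma supn_scale:
  assumes "compact S" "continuous_on S g"
  shows "supn S (\<lambda>t. a * g t) = \<bar>a\<bar> * supn S g"
proof (rule antisym)
  have c: "continuous_on S (\<lambda>t. a * g t)" using assms(2) by (intro continuous_intros)
  show "supn S (\<lambda>t. a * g t) \<le> \<bar>a\<bar> * supn S g"
    using supn_upper[OF assms] supn_nonneg[OF assms]
    by (intro supn_least) (auto simp: abs_mult intro: mult_left_mono)
  show "\<bar>a\<bar> * supn S g \<le> supn S (\<lambda>t. a * g t)"
  proof (cases "a = 0")
    case True then show ?thesis using supn_nonneg[OF assms(1) c] by simp
  next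
    case False
    have "supn S g \<le> supn S (\<lambda>t. a * g t) / \<bar>a\<bar>"
    proof (rule supn_least)
      show "0 \<le> supn S (\<lambda>t. a * g t) / \<bar>a\<bar>" using supn_nonneg[OF assms(1) c] by simp
      fix t assume "t \<in> S"
      then have "\<bar>a\<bar> * \<bar>g t\<bar> \<le> supn S (\<lambda>t. a * g t)"
        using supn_upper[OF assms(1) c] by (simp add: abs_mult)
      then show "\<bar>g t\<bar> \<le> supn S (\<lambda>t. a * g t) / \<bar>a\<bar>" using False
        by (simp add: field_simps)
    qed
    then show ?thesis using False by (simp add: field_simps)
  qed
qed

lemma supn_triangle:
  assumes "compact S" "continuous_on S g" "continuous_on S h"
  shows "supn S (\<lambda>t. g t + h t) \<le> supn S g + supn S h"
proof (rule supn_least)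
  show "0 \<le> supn S g + supn S h" using supn_nonneg assms by (metis add_nonneg_nonneg)
  fix t assume "t \<in> S"
  then show "\<bar>g t + h t\<bar> \<le> supn S g + supn S h"
    using supn_upper[OF assms(1,2)] supn_upper[OF assms(1,3)]
    by (smt (verit, best))
qed

lemma supn_mono:
  assumes "compact S" "continuous_on S h" "\<And>t. t \<in> S \<Longrightarrow> \<bar>g t\<bar> \<le> \<bar>h t\<bar>"
  shows "supn S g \<le> supn S h"
  using supn_upper[OF assms(1,2)] supn_nonneg[OF assms(1,2)] assms(3)
  by (intro supn_least) (auto intro: order_trans)

lemma supn_zero_imp:
  assumes "compact S" "continuous_on S g" "supn S g = 0" "t \<in> S"
  shows "g t = 0"
  using supn_upper[OF assms(1,2,4)] assms(3) by simp

lemma supn_zero: "supn S (\<lambda>t. 0) = 0"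
  by (rule antisym[OF supn_least]) (auto simp: supn_def)

lemma CfunOn_lin:
  assumes "g \<in> CfunOn E" "h \<in> CfunOn E"
  shows "(\<lambda>t. a * g t + b * h t) \<in> CfunOn E"
  using assms unfolding CfunOn_def by (auto intro!: continuous_intros)

lemma CfunOn_add:
  assumes "g \<in> CfunOn E" "h \<in> CfunOn E"
  shows "(\<lambda>t. g t + h t) \<in> CfunOn E"
  using assms unfolding CfunOn_def by (auto intro!: continuous_intros)

lemma CfunOn_scal:
  assumes "g \<in> CfunOn E"
  shows "(\<lambda>t. a * g t) \<in> CfunOn E"
  using assms unfolding CfunOn_def by (auto intro!: continuous_intros)

lemma CfunOn_max:
  assumes "g \<in> CfunOn E" "h \<in> CfunOn E"
  shows "(\<lambda>t. max (g t) (h t)) \<in> CfunOn E"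
  using assms unfolding CfunOn_def by (auto intro!: continuous_intros)

lemma CfunOn_zero: "(\<lambda>t. 0) \<in> CfunOn E"
  unfolding CfunOn_def by auto

lemma CfunOn_cont: "g \<in> CfunOn E \<Longrightarrow> continuous_on E g"
  unfolding CfunOn_def by auto

lemma CfunOn_out: "g \<in> CfunOn E \<Longrightarrow> t \<notin> E \<Longrightarrow> g t = 0"
  unfolding CfunOn_def by auto

definition LE :: "'a::topological_space set \<Rightarrow> ('a \<Rightarrow> real) set blat" where
  "LE E = \<lparr>carr = (\<lambda>g. {g}) ` CfunOn E,
     add = (\<lambda>X Y. {\<lambda>t. the_elem X t + the_elem Y t}),
     scal = (\<lambda>a X. {\<lambda>t. a * the_elem X t}),
     zer = {\<lambda>t. 0},
     nrm = (\<lambda>X. supn E (the_elem X)),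
     leq = (\<lambda>X Y. \<forall>t. the_elem X t \<le> the_elem Y t),
     join = (\<lambda>X Y. {\<lambda>t. max (the_elem X t) (the_elem Y t)})\<rparr>"

lemma CfunOn_complete:
  assumes E: "compact E" and g: "\<And>n. g n \<in> CfunOn E"
    and C: "\<forall>e>0. \<exists>K. \<forall>m\<ge>K. \<forall>n\<ge>K. supn E (\<lambda>t. g m t + -1 * g n t) < e"
  shows "\<exists>l\<in>CfunOn E. (\<lambda>n. supn E (\<lambda>t. g n t + -1 * l t)) \<longlonglongrightarrow> 0"
proof -
  have cont: "\<And>n. continuous_on E (g n)" using g CfunOn_cont by blast
  have "uniformly_Cauchy_on E g"
    unfolding uniformly_Cauchy_on_def
  proof (intro allI impI)
    fix e :: real assume "e > 0"
    then obtain K where K: "\<forall>m\<ge>K. \<forall>n\<ge>K. supn E (\<lambda>t. g m t + -1 * g n t) < e" using C by blast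
    show "\<exists>M. \<forall>x\<in>E. \<forall>m\<ge>M. \<forall>n\<ge>M. dist (g m x) (g n x) < e"
    proof (intro exI ballI allI impI)
      fix x m n assume "x \<in> E" "K \<le> m" "K \<le> n"
      have "continuous_on E (\<lambda>t. g m t + -1 * g n t)" using cont by (intro continuous_intros)
      from supn_upper[OF E this \<open>x \<in> E\<close>]
      have "\<bar>g m x + -1 * g n x\<bar> \<le> supn E (\<lambda>t. g m t + -1 * g n t)" .
      moreover have "supn E (\<lambda>t. g m t + -1 * g n t) < e" using K \<open>K \<le> m\<close> \<open>K \<le> n\<close> by blast
      ultimately show "dist (g m x) (g n x) < e" unfolding dist_real_def by linarith
    qed
  qed
  then obtain l0 where l0: "uniform_limit E g l0 sequentially"
    using Cauchy_uniformly_convergent uniformly_convergent_on_def by blast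
  define l where "l t = (if t \<in> E then l0 t else 0)" for t
  have ul: "uniform_limit E g l sequentially"
    using l0 unfolding uniform_limit_iff l_def by (auto elim!: eventually_mono)
  have "continuous_on E l"
    by (rule uniform_limit_theorem[OF _ ul]) (auto simp: cont)
  then have lC: "l \<in> CfunOn E" unfolding CfunOn_def l_def by auto
  have "(\<lambda>n. supn E (\<lambda>t. g n t + -1 * l t)) \<longlonglongrightarrow> 0"
  proof (rule LIMSEQ_I)
    fix r :: real assume "r > 0"
    then have "\<forall>\<^sub>F n in sequentially. \<forall>x\<in>E. dist (g n x) (l x) < r/2"
      using ul \<open>r > 0\<close> unfolding uniform_limit_iff by (meson half_gt_zero)
    then obtain N where N: "\<And>n. n \<ge> N \<Longrightarrow> \<forall>x\<in>E. dist (g n x) (l x) < r/2"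
      unfolding eventually_sequentially by blast
    show "\<exists>no. \<forall>n\<ge>no. norm (supn E (\<lambda>t. g n t + -1 * l t) - 0) < r"
    proof (intro exI allI impI)
      fix n assume "N \<le> n"
      have c: "continuous_on E (\<lambda>t. g n t + -1 * l t)"
        using cont \<open>continuous_on E l\<close> by (intro continuous_intros)
      have "supn E (\<lambda>t. g n t + -1 * l t) \<le> r/2"
        using N[OF \<open>N \<le> n\<close>] \<open>r > 0\<close> by (intro supn_least) (auto simp: dist_real_def)
      then show "norm (supn E (\<lambda>t. g n t + -1 * l t) - 0) < r"
        using supn_nonneg[OF E c] \<open>r > 0\<close> by simp
    qed
  qed
  then show ?thesis using lC by blast
qed

lemma LE_bl:
  assumes E: "compact E"
  shows "banach_lattice (LE E)"
  unfolding banach_lattice_def babs_def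
proof (intro conjI)
  note cl = CfunOn_add CfunOn_scal CfunOn_max CfunOn_zero
  show "zer (LE E) \<in> carr (LE E)" by (simp add: LE_def CfunOn_zero)
  show "\<forall>x\<in>carr (LE E). \<forall>y\<in>carr (LE E). add (LE E) x y \<in> carr (LE E) \<and> join (LE E) x y \<in> carr (LE E)"
    by (auto simp: LE_def intro!: imageI cl)
  show "\<forall>a. \<forall>x\<in>carr (LE E). scal (LE E) a x \<in> carr (LE E)"
    by (auto simp: LE_def intro!: imageI cl)
  show "\<forall>x\<in>carr (LE E). \<forall>y\<in>carr (LE E). \<forall>z\<in>carr (LE E). add (LE E) (add (LE E) x y) z = add (LE E) x (add (LE E) y z)"
    by (auto simp: LE_def algebra_simps)
  show "\<forall>x\<in>carr (LE E). \<forall>y\<in>carr (LE E). add (LE E) x y = add (LE E) y x"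
    by (auto simp: LE_def algebra_simps)
  show "\<forall>x\<in>carr (LE E). add (LE E) x (zer (LE E)) = x"
    by (auto simp: LE_def algebra_simps)
  show "\<forall>x\<in>carr (LE E). add (LE E) x (scal (LE E) (- 1) x) = zer (LE E)"
    by (auto simp: LE_def algebra_simps)
  show "\<forall>a. \<forall>x\<in>carr (LE E). \<forall>y\<in>carr (LE E). scal (LE E) a (add (LE E) x y) = add (LE E) (scal (LE E) a x) (scal (LE E) a y)"
    by (auto simp: LE_def algebra_simps)
  show "\<forall>a b. \<forall>x\<in>carr (LE E). scal (LE E) (a + b) x = add (LE E) (scal (LE E) a x) (scal (LE E) b x)"
    by (auto simp: LE_def algebra_simps)
  show "\<forall>a b. \<forall>x\<in>carr (LE E). scal (LE E) a (scal (LE E) b x) = scal (LE E) (a * b) x"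
    by (auto simp: LE_def algebra_simps)
  show "\<forall>x\<in>carr (LE E). scal (LE E) 1 x = x"
    by (auto simp: LE_def algebra_simps)
  show "\<forall>x\<in>carr (LE E). 0 \<le> nrm (LE E) x \<and> (nrm (LE E) x = 0) = (x = zer (LE E))"
  proof (clarsimp simp: LE_def, intro conjI)
    fix g assume g: "g \<in> CfunOn E"
    show "0 \<le> supn E g" using supn_nonneg[OF E CfunOn_cont[OF g]] .
    show "(supn E g = 0) = (g = (\<lambda>t. 0))"
    proof
      assume "supn E g = 0"
      then show "g = (\<lambda>t. 0)"
        using supn_zero_imp[OF E CfunOn_cont[OF g]] CfunOn_out[OF g] by (metis ext)
    qed (simp add: supn_zero)
  qed
  show "\<forall>a. \<forall>x\<in>carr (LE E). nrm (LE E) (scal (LE E) a x) = \<bar>a\<bar> * nrm (LE E) x"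
    by (auto simp: LE_def supn_scale[OF E CfunOn_cont])
  show "\<forall>x\<in>carr (LE E). \<forall>y\<in>carr (LE E). nrm (LE E) (add (LE E) x y) \<le> nrm (LE E) x + nrm (LE E) y"
    by (auto simp: LE_def supn_triangle[OF E CfunOn_cont CfunOn_cont])
  show "\<forall>s. (\<forall>n. s n \<in> carr (LE E)) \<and>
        (\<forall>e>0. \<exists>K. \<forall>m\<ge>K. \<forall>n\<ge>K. nrm (LE E) (add (LE E) (s m) (scal (LE E) (- 1) (s n))) < e) \<longrightarrow>
        (\<exists>l\<in>carr (LE E). (\<lambda>n. nrm (LE E) (add (LE E) (s n) (scal (LE E) (- 1) l))) \<longlonglongrightarrow> 0)"
  proof (intro allI impI, elim conjE)
    fix s :: "nat \<Rightarrow> ('a \<Rightarrow> real) set" assume s: "\<forall>n. s n \<in> carr (LE E)"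
      and C: "\<forall>e>0. \<exists>K. \<forall>m\<ge>K. \<forall>n\<ge>K. nrm (LE E) (add (LE E) (s m) (scal (LE E) (- 1) (s n))) < e"
    define g where "g n = the_elem (s n)" for n
    have sg: "s n = {g n}" and gC: "g n \<in> CfunOn E" for n
    proof -
      have "s n \<in> (\<lambda>g. {g}) ` CfunOn E" using s by (simp add: LE_def)
      then obtain h where "h \<in> CfunOn E" "s n = {h}" by blast
      then show "s n = {g n}" "g n \<in> CfunOn E" unfolding g_def by auto
    qed
    have "\<forall>e>0. \<exists>K. \<forall>m\<ge>K. \<forall>n\<ge>K. supn E (\<lambda>t. g m t + -1 * g n t) < e"
      using C by (simp add: LE_def sg)
    then have "\<exists>l\<in>CfunOn E. (\<lambda>n. supn E (\<lambda>t. g n t + -1 * l t)) \<longlonglongrightarrow> 0"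
      using CfunOn_complete[of E g] E gC by blast
    then obtain l where
      l: "l \<in> CfunOn E" "(\<lambda>n. supn E (\<lambda>t. g n t + -1 * l t)) \<longlonglongrightarrow> 0" by blast
    show "\<exists>l\<in>carr (LE E). (\<lambda>n. nrm (LE E) (add (LE E) (s n) (scal (LE E) (- 1) l))) \<longlonglongrightarrow> 0"
      by (rule bexI[of _ "{l}"]) (use l in \<open>auto simp: LE_def sg\<close>)
  qed
  show "\<forall>x\<in>carr (LE E). leq (LE E) x x" by (auto simp: LE_def)
  show "\<forall>x\<in>carr (LE E). \<forall>y\<in>carr (LE E). leq (LE E) x y \<and> leq (LE E) y x \<longrightarrow> x = y"
    by (auto simp: LE_def intro!: ext antisym)
  show "\<forall>x\<in>carr (LE E). \<forall>y\<in>carr (LE E). \<forall>z\<in>carr (LE E). leq (LE E) x y \<and> leq (LE E) y z \<longrightarrow> leq (LE E) x z"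
    by (auto simp: LE_def intro: order_trans)
  show "\<forall>x\<in>carr (LE E). \<forall>y\<in>carr (LE E). \<forall>z\<in>carr (LE E). leq (LE E) x y \<longrightarrow> leq (LE E) (add (LE E) x z) (add (LE E) y z)"
    by (auto simp: LE_def)
  show "\<forall>a. \<forall>x\<in>carr (LE E). \<forall>y\<in>carr (LE E). 0 \<le> a \<and> leq (LE E) x y \<longrightarrow> leq (LE E) (scal (LE E) a x) (scal (LE E) a y)"
    by (auto simp: LE_def intro: mult_left_mono)
  show "\<forall>x\<in>carr (LE E). \<forall>y\<in>carr (LE E). leq (LE E) x (join (LE E) x y) \<and> leq (LE E) y (join (LE E) x y)"
    by (auto simp: LE_def)
  show "\<forall>x\<in>carr (LE E). \<forall>y\<in>carr (LE E). \<forall>z\<in>carr (LE E). leq (LE E) x z \<and> leq (LE E) y z \<longrightarrow> leq (LE E) (join (LE E) x y) z"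
    by (auto simp: LE_def)
  show "\<forall>x\<in>carr (LE E). \<forall>y\<in>carr (LE E). leq (LE E) (join (LE E) x (scal (LE E) (- 1) x)) (join (LE E) y (scal (LE E) (- 1) y)) \<longrightarrow> nrm (LE E) x \<le> nrm (LE E) y"
  proof (clarsimp simp: LE_def)
    fix g h assume g: "g \<in> CfunOn E" and h: "h \<in> CfunOn E"
      and le: "\<forall>t. g t \<le> max (h t) (- h t) \<and> - g t \<le> max (h t) (- h t)"
    show "supn E g \<le> supn E h"
    proof (rule supn_mono[OF E CfunOn_cont[OF h]])
      fix t
      have "max (g t) (- g t) \<le> max (h t) (- h t)" using le by (simp add: max.bounded_iff)
      moreover have "max (g t) (- g t) = \<bar>g t\<bar>" "max (h t) (- h t) = \<bar>h t\<bar>" by auto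
      ultimately show "\<bar>g t\<bar> \<le> \<bar>h t\<bar>" by simp
    qed
  qed
qed

theorem theorem11:
  fixes E :: "'a::t2_space set"
  assumes "compact (UNIV :: 'a set)"
    and "admits_equiv_URED (Cfun :: ('a \<Rightarrow> real) set) (supn UNIV)"
    and "closed E"
    and "\<forall>(L :: ('a \<Rightarrow> real) set blat) T.
           banach_lattice L \<and> lin_lattice_hom L (CfunOn E) T \<and> bounded_op L E T \<longrightarrow>
           (\<exists>T'. lin_lattice_hom L Cfun T' \<and> bounded_op L UNIV T' \<and>
                 (\<forall>x\<in>carr L. \<forall>t\<in>E. T' x t = T x t) \<and>
                 opnorm L UNIV T' = opnorm L E T)"
  shows "admits_equiv_URED (CfunOn E) (supn E)"
proof -
  have U: "compact (UNIV :: 'a set)" by fact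
  have E: "compact E" using closed_Int_compact[OF assms(3) U] by simp
  have hom: "lin_lattice_hom (LE E) (CfunOn E) the_elem"
    unfolding lin_lattice_hom_def by (auto simp: LE_def intro: CfunOn_add CfunOn_scal CfunOn_max)
  have bd: "bounded_op (LE E) E the_elem"
    unfolding bounded_op_def by (rule exI[of _ 1]) (auto simp: LE_def)
  obtain T' where T'hom: "lin_lattice_hom (LE E) Cfun T'" and T'bd: "bounded_op (LE E) UNIV T'"
    and T'ag: "\<forall>x\<in>carr (LE E). \<forall>t\<in>E. T' x t = the_elem x t"
    using assms(4) LE_bl[OF E] hom bd by blast
  obtain K where K: "\<forall>x\<in>carr (LE E). supn UNIV (T' x) \<le> K * nrm (LE E) x"
    using T'bd unfolding bounded_op_def by blast
  define S where "S g = T' {g}" for g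
  have carrI: "{g} \<in> carr (LE E)" if "g \<in> CfunOn E" for g using that by (simp add: LE_def)
  have SC: "continuous_on UNIV (S g)" if "g \<in> CfunOn E" for g
    using T'hom carrI[OF that] unfolding lin_lattice_hom_def S_def Cfun_def by blast
  have Sag: "S g t = g t" if "g \<in> CfunOn E" "t \<in> E" for g t
    using T'ag carrI[OF that(1)] that(2) unfolding S_def by simp
  have Sbd: "supn UNIV (S g) \<le> max K 1 * supn E g" if "g \<in> CfunOn E" for g
  proof -
    have "supn UNIV (S g) \<le> K * supn E g"
      using K that unfolding S_def by (simp add: LE_def)
    also have "\<dots> \<le> max K 1 * supn E g"
      using supn_nonneg[OF E CfunOn_cont[OF that]] by (intro mult_right_mono) auto
    finally show ?thesis .
  qed
  have Slow: "supn E g \<le> supn UNIV (S g)" if "g \<in> CfunOn E" for g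
  proof (rule supn_least)
    show "0 \<le> supn UNIV (S g)" using supn_nonneg[OF U SC[OF that]] .
    fix t assume "t \<in> E"
    then show "\<bar>g t\<bar> \<le> supn UNIV (S g)"
      using supn_upper[OF U SC[OF that], of t] Sag[OF that \<open>t \<in> E\<close>] by simp
  qed
  have Slin: "S f = (\<lambda>t. a * S g t + b * S h t)"
    if "g \<in> CfunOn E" "h \<in> CfunOn E" "f = (\<lambda>t. a * g t + b * h t)" for f g h a b
  proof -
    have "{f} = add (LE E) (scal (LE E) a {g}) (scal (LE E) b {h})"
      using that(3) by (simp add: LE_def)
    moreover have "scal (LE E) a {g} \<in> carr (LE E)" "scal (LE E) b {h} \<in> carr (LE E)"
      using carrI[OF CfunOn_scal[OF that(1)]] carrI[OF CfunOn_scal[OF that(2)]]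
      by (auto simp: LE_def)
    ultimately show ?thesis
      using T'hom carrI[OF that(1)] carrI[OF that(2)] unfolding lin_lattice_hom_def S_def
      by simp
  qed
  have S0: "S (\<lambda>t. 0) = (\<lambda>t. 0)"
    using Slin[OF CfunOn_zero CfunOn_zero, of "\<lambda>t. 0" 0 0] by simp
  obtain N :: "('a \<Rightarrow> real) \<Rightarrow> real" where N: "is_norm_on Cfun N" "equiv_norms_on Cfun N (supn UNIV)" "URED_on Cfun N"
    using assms(2) unfolding admits_equiv_URED_def by blast
  obtain c C where cC: "0 < c" "0 < C" "\<forall>x\<in>Cfun. c * supn UNIV x \<le> N x \<and> N x \<le> C * supn UNIV x"
    using N(2) unfolding equiv_norms_on_def by blast
  have SCf: "S g \<in> Cfun" if "g \<in> CfunOn E" for g using SC[OF that] by (simp add: Cfun_def)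
  define N' where "N' g = N (S g)" for g
  have "is_norm_on (CfunOn E) N'"
    unfolding is_norm_on_def
  proof (intro conjI ballI allI)
    fix g assume g: "g \<in> CfunOn E"
    show "0 \<le> N' g" using N(1) SCf[OF g] unfolding is_norm_on_def N'_def by blast
    show "(N' g = 0) = (g = (\<lambda>t. 0))"
    proof
      assume "N' g = 0"
      then have "S g = (\<lambda>t. 0)" using N(1) SCf[OF g] unfolding is_norm_on_def N'_def by blast
      then show "g = (\<lambda>t. 0)"
        using Sag[OF g] CfunOn_out[OF g] by (metis ext)
    next
      assume "g = (\<lambda>t. 0)"
      then show "N' g = 0" using N(1) S0 CfunOn_zero unfolding is_norm_on_def N'_def
        by (metis SCf)
    qed
    fix a
    have "S (\<lambda>t. a * g t) = (\<lambda>t. a * S g t)"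
      using Slin[OF g g, of "\<lambda>t. a * g t" a 0] by simp
    then show "N' (\<lambda>t. a * g t) = \<bar>a\<bar> * N' g"
      using N(1) SCf[OF g] unfolding is_norm_on_def N'_def by simp
  next
    fix g h assume g: "g \<in> CfunOn E" and h: "h \<in> CfunOn E"
    have "S (\<lambda>t. g t + h t) = (\<lambda>t. S g t + S h t)"
      using Slin[OF g h, of "\<lambda>t. g t + h t" 1 1] by simp
    then show "N' (\<lambda>t. g t + h t) \<le> N' g + N' h"
      using N(1) SCf[OF g] SCf[OF h] unfolding is_norm_on_def N'_def by simp
  qed
  moreover have "equiv_norms_on (CfunOn E) N' (supn E)"
    unfolding equiv_norms_on_def
  proof (intro exI conjI ballI)
    show "0 < c" by fact
    show "0 < C * max K 1" using cC(2) by simp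
    fix g assume g: "g \<in> CfunOn E"
    have n1: "c * supn UNIV (S g) \<le> N' g" "N' g \<le> C * supn UNIV (S g)"
      using cC(3) SCf[OF g] unfolding N'_def by auto
    show "c * supn E g \<le> N' g"
      using n1(1) Slow[OF g] cC(1) by (meson mult_left_mono less_imp_le order_trans)
    have "C * supn UNIV (S g) \<le> C * (max K 1 * supn E g)"
      using Sbd[OF g] cC(2) by simp
    then show "N' g \<le> C * max K 1 * supn E g" using n1(2) by simp
  qed
  moreover have "URED_on (CfunOn E) N'"
    unfolding URED_on_def
  proof (intro allI impI, elim conjE)
    fix xs ys :: "nat \<Rightarrow> 'a \<Rightarrow> real" and z and r :: "nat \<Rightarrow> real"
    assume xy: "\<forall>n. xs n \<in> CfunOn E \<and> ys n \<in> CfunOn E \<and> N' (xs n) = 1 \<and> N' (ys n) = 1"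
      and z: "z \<in> CfunOn E" and d: "\<forall>n. (\<lambda>t. xs n t - ys n t) = (\<lambda>t. r n * z t)"
      and m: "(\<lambda>n. N' (\<lambda>t. (xs n t + ys n t) / 2)) \<longlonglongrightarrow> 1"
    have xC: "xs n \<in> CfunOn E" and yC: "ys n \<in> CfunOn E" for n using xy by auto
    have Sd: "S (\<lambda>t. xs n t - ys n t) = (\<lambda>t. S (xs n) t - S (ys n) t)" for n
      using Slin[OF xC[of n] yC[of n], where f="\<lambda>t. xs n t - ys n t" and a=1 and b="-1"] by simp
    have Sm: "S (\<lambda>t. (xs n t + ys n t) / 2) = (\<lambda>t. (S (xs n) t + S (ys n) t) / 2)" for n
      using Slin[OF xC[of n] yC[of n], where f="\<lambda>t. (xs n t + ys n t) / 2" and a="1/2" and b="1/2"] by (simp add: add_divide_distrib)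
    have Sz: "S (\<lambda>t. r n * z t) = (\<lambda>t. r n * S z t)" for n
      using Slin[OF z z, of "\<lambda>t. r n * z t" "r n" 0] by simp
    have key: "(\<forall>n. S (xs n) \<in> Cfun \<and> S (ys n) \<in> Cfun \<and> N (S (xs n)) = 1 \<and> N (S (ys n)) = 1) \<and>
        S z \<in> Cfun \<and> (\<forall>n. (\<lambda>t. S (xs n) t - S (ys n) t) = (\<lambda>t. r n * S z t)) \<and>
        ((\<lambda>n. N (\<lambda>t. (S (xs n) t + S (ys n) t) / 2)) \<longlonglongrightarrow> 1)"
    proof (intro conjI allI)
      fix n
      show "S (xs n) \<in> Cfun" "S (ys n) \<in> Cfun" using SCf xC yC by auto
      show "N (S (xs n)) = 1" "N (S (ys n)) = 1" using xy unfolding N'_def by auto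
      show "(\<lambda>t. S (xs n) t - S (ys n) t) = (\<lambda>t. r n * S z t)"
        using Sd[of n] Sz[of n] d by metis
    next
      show "S z \<in> Cfun" using SCf z by auto
      show "(\<lambda>n. N (\<lambda>t. (S (xs n) t + S (ys n) t) / 2)) \<longlonglongrightarrow> 1"
        using m unfolding N'_def Sm .
    qed
    have "(\<lambda>n. N (\<lambda>t. S (xs n) t - S (ys n) t)) \<longlonglongrightarrow> 0"
      using N(3)[unfolded URED_on_def, rule_format, of "\<lambda>n. S (xs n)" "\<lambda>n. S (ys n)" "S z" r] key
      by blast
    then show "(\<lambda>n. N' (\<lambda>t. xs n t - ys n t)) \<longlonglongrightarrow> 0"
      unfolding N'_def Sd .
  qed
  ultimately show ?thesis unfolding admits_equiv_URED_def by blast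
qed

end
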